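(* Let $F$ be a probability distribution over $[a,\infty)$, $a\ge0$, such that $\mathrm{Rev}(F^m)<\infty$. For $b\ge a$ let $F_b$ denote the truncation of $F$ to $[a,b]$. If $\lim_{b\to\infty}\mathrm{Rev}(F_b^m)$ exists (converges), then $\lim_{b\to\infty}\mathrm{Rev}(F_b^m)=\mathrm{Rev}(F^m)$.
   Context: For a distribution $G$ on $\mathbb R_+^m$, $\mathrm{Rev}(G)$ is the supremum of the expected revenue over all (possibly randomized) incentive compatible and individually rational mechanisms for selling $m$ items to a single buyer with additive valuations whose value vector is drawn from $G$. $F^m$ denotes the product distribution (values i.i.d. from $F$). The truncation $F_b$ is the distribution on $[a,b]$ with cdf $F_b(x)=F(x)/F(b)$ for $x\in[a,b]$. *)

theory Defs
  imports "HOL-Probability.Probability"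
begin

text \<open>Value vectors for m items are functions nat => real, extensional on {..<m}.
  The buyer's possible valuations are the nonnegative vectors (R_+^m).\<close>

definition valuations :: "nat \<Rightarrow> (nat \<Rightarrow> real) set" where
  "valuations m = PiE {..<m} (\<lambda>_. {0..})"

definition dotp :: "nat \<Rightarrow> (nat \<Rightarrow> real) \<Rightarrow> (nat \<Rightarrow> real) \<Rightarrow> real" where
  "dotp m v y = (\<Sum>i<m. v i * y i)"

text \<open>A (possibly randomized) mechanism: allocation probabilities x v i in [0,1]
  and payment p v; incentive compatible and individually rational for an
  additive buyer; measurable w.r.t. the distribution G.\<close>

definition is_mechanism ::
  "nat \<Rightarrow> (nat \<Rightarrow> real) measure \<Rightarrow> ((nat \<Rightarrow> real) \<Rightarrow> nat \<Rightarrow> real) \<Rightarrow> ((nat \<Rightarrow> real) \<Rightarrow> real) \<Rightarrow> bool" where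
  "is_mechanism m G x p \<longleftrightarrow>
     p \<in> borel_measurable G \<and>
     (\<forall>i<m. (\<lambda>v. x v i) \<in> borel_measurable G) \<and>
     (\<forall>v\<in>valuations m. \<forall>i<m. 0 \<le> x v i \<and> x v i \<le> 1) \<and>
     (\<forall>v\<in>valuations m. \<forall>w\<in>valuations m.
        dotp m v (x v) - p v \<ge> dotp m v (x w) - p w) \<and>
     (\<forall>v\<in>valuations m. dotp m v (x v) - p v \<ge> 0)"

text \<open>Expected revenue (extended real), defined when the negative part of the payment
  has finite expectation (otherwise the revenue is -infinity or undefined and irrelevant).\<close>

definition exp_revenue :: "(nat \<Rightarrow> real) measure \<Rightarrow> ((nat \<Rightarrow> real) \<Rightarrow> real) \<Rightarrow> ereal" where
  "exp_revenue G p =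
     enn2ereal (\<integral>\<^sup>+ v. ennreal (p v) \<partial>G) - enn2ereal (\<integral>\<^sup>+ v. ennreal (- p v) \<partial>G)"

definition Rev :: "nat \<Rightarrow> (nat \<Rightarrow> real) measure \<Rightarrow> ereal" where
  "Rev m G = Sup {exp_revenue G p | x p.
      is_mechanism m G x p \<and> (\<integral>\<^sup>+ v. ennreal (- p v) \<partial>G) < \<infinity>}"

definition prod_dist :: "nat \<Rightarrow> real measure \<Rightarrow> (nat \<Rightarrow> real) measure" where
  "prod_dist m F = PiM {..<m} (\<lambda>_. F)"

text \<open>Truncation F_b of F (supported on [a,infinity)) to [a,b]: cdf F(x)/F(b) on [a,b],
  i.e. F conditioned on [a,b].\<close>

definition truncate_dist :: "real measure \<Rightarrow> real \<Rightarrow> real \<Rightarrow> real measure" where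
  "truncate_dist F a b = uniform_measure F {a..b}"

end

theory Submission
  imports Defs
begin


lemma PiM_uniform:
  fixes F :: "'b measure" and I :: "'i set"
  assumes F: "prob_space F" and I: "finite I" and A: "A \<in> sets F" and A0: "emeasure F A \<noteq> 0"
  shows "PiM I (\<lambda>_. uniform_measure F A) = uniform_measure (PiM I (\<lambda>_. F)) (PiE I (\<lambda>_. A))"
proof -
  interpret F: prob_space F by fact
  have pU: "prob_space (uniform_measure F A)"
    by (rule prob_space_uniform_measure) (use A0 in auto)
  interpret U: product_prob_space "\<lambda>_. uniform_measure F A" I
    unfolding product_prob_space_def product_prob_space_axioms_def product_sigma_finite_def
    using pU prob_space_imp_sigma_finite by auto
  interpret FF: product_prob_space "\<lambda>_. F" I
    unfolding product_prob_space_def product_prob_space_axioms_def product_sigma_finite_def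
    using F prob_space_imp_sigma_finite by auto
  have sPA: "PiE I (\<lambda>_. A) \<in> sets (PiM I (\<lambda>_. F))"
    using A by (auto intro!: sets_PiM_I_finite I)
  show ?thesis
  proof (rule U.PiM_eqI[symmetric, OF I])
    show "sets (uniform_measure (PiM I (\<lambda>_. F)) (PiE I (\<lambda>_. A))) = sets (PiM I (\<lambda>_. uniform_measure F A))"
      by (auto intro!: sets_PiM_cong)
  next
    fix B assume B: "\<And>i. i \<in> I \<Longrightarrow> B i \<in> sets (uniform_measure F A)"
    have sPB: "PiE I B \<in> sets (PiM I (\<lambda>_. F))"
      using B by (auto intro!: sets_PiM_I_finite I)
    have "emeasure (uniform_measure (PiM I (\<lambda>_. F)) (PiE I (\<lambda>_. A))) (PiE I B)
       = emeasure (PiM I (\<lambda>_. F)) (PiE I (\<lambda>i. A \<inter> B i)) / emeasure (PiM I (\<lambda>_. F)) (PiE I (\<lambda>_. A))"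
      using sPA sPB by (simp add: PiE_Int)
    also have "\<dots> = (\<Prod>i\<in>I. emeasure F (A \<inter> B i)) / (\<Prod>i\<in>I. emeasure F A)"
      using A B I by (simp add: FF.emeasure_PiM sets.Int)
    also have "\<dots> = (\<Prod>i\<in>I. emeasure F (A \<inter> B i) / emeasure F A)"
    proof -
      have pos: "measure F A > 0" using A0 F.emeasure_eq_measure[of A] measure_nonneg[of F A]
        by (metis ennreal_0 order_le_imp_less_or_eq)
      have "(\<Prod>i\<in>I. emeasure F (A \<inter> B i)) / (\<Prod>i\<in>I. emeasure F A)
          = (\<Prod>i\<in>I. ennreal (measure F (A \<inter> B i))) / (\<Prod>i\<in>I. ennreal (measure F A))"
        by (simp add: F.emeasure_eq_measure)
      also have "\<dots> = ennreal ((\<Prod>i\<in>I. measure F (A \<inter> B i)) / (\<Prod>i\<in>I. measure F A))"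
        using A0 F.emeasure_eq_measure
        by (subst divide_ennreal[symmetric]) (auto simp: pos prod_ennreal prod_nonneg ennreal_power intro!: prod_pos)
      also have "\<dots> = (\<Prod>i\<in>I. ennreal (measure F (A \<inter> B i) / measure F A))"
        by (subst prod_ennreal) (auto simp: prod_dividef)
      also have "\<dots> = (\<Prod>i\<in>I. emeasure F (A \<inter> B i) / emeasure F A)"
        using pos F.emeasure_eq_measure
        by (intro prod.cong refl) (simp add: divide_ennreal[symmetric])
      finally show ?thesis .
    qed
    also have "\<dots> = (\<Prod>i\<in>I. emeasure (uniform_measure F A) (B i))"
      using A B by (intro prod.cong refl) simp
    finally show "emeasure (uniform_measure (PiM I (\<lambda>_. F)) (PiE I (\<lambda>_. A))) (PiE I B) = (\<Prod>i\<in>I. emeasure (uniform_measure F A) (B i))" .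
  qed
qed



definition mechS :: "nat \<Rightarrow> (nat\<Rightarrow>real) measure \<Rightarrow> (((nat \<Rightarrow> real) \<Rightarrow> nat \<Rightarrow> real) \<times> ((nat \<Rightarrow> real) \<Rightarrow> real)) set" where
  "mechS m M = {(x,p). is_mechanism m M x p \<and> (\<forall>v. 0 \<le> p v)}"

lemma is_mechanism_cong_sets:
  "sets G = sets G' \<Longrightarrow> is_mechanism m G = is_mechanism m G'"
proof -
  assume "sets G = sets G'"
  then have eq: "measurable G borel = measurable G' borel" by (rule measurable_cong_sets) simp
  show ?thesis unfolding is_mechanism_def[abs_def] eq by (rule refl)
qed

lemma mechS_cong_sets: assumes "sets G = sets G'" shows "mechS m G = mechS m G'"
  unfolding mechS_def is_mechanism_cong_sets[OF assms] by (rule refl)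

lemma Rev_eq:
  assumes AE: "AE v in G. v \<in> valuations m"
  shows "Rev m G = (SUP s\<in>mechS m G. enn2ereal (\<integral>\<^sup>+ v. ennreal (snd s v) \<partial>G))"
proof (rule antisym)
  show "(SUP s\<in>mechS m G. enn2ereal (\<integral>\<^sup>+ v. ennreal (snd s v) \<partial>G)) \<le> Rev m G"
  proof (rule SUP_least)
    fix s assume s: "s \<in> mechS m G"
    obtain x p where sp: "s = (x,p)" by (cases s)
    with s have mech: "is_mechanism m G x p" and pos: "\<And>v. 0 \<le> p v" by (auto simp: mechS_def)
    have neg0: "(\<integral>\<^sup>+ v. ennreal (- p v) \<partial>G) = 0"
      using pos by (simp add: ennreal_neg)
    have "exp_revenue G p = enn2ereal (\<integral>\<^sup>+ v. ennreal (p v) \<partial>G)"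
      unfolding exp_revenue_def neg0 by (simp add: zero_ennreal.rep_eq)
    then show "enn2ereal (\<integral>\<^sup>+ v. ennreal (snd s v) \<partial>G) \<le> Rev m G"
      unfolding Rev_def using mech neg0 sp by (intro Sup_upper) (auto intro!: exI[of _ x] exI[of _ p])
  qed
next
  show "Rev m G \<le> (SUP s\<in>mechS m G. enn2ereal (\<integral>\<^sup>+ v. ennreal (snd s v) \<partial>G))"
    unfolding Rev_def
  proof (rule Sup_least, clarify)
    fix x p assume mech: "is_mechanism m G x p"
    define z :: "nat \<Rightarrow> real" where "z = (\<lambda>i. if i < m then 0 else undefined)"
    have zV: "z \<in> valuations m" by (auto simp: z_def valuations_def PiE_def extensional_def)
    have dz: "\<And>y. dotp m z y = 0" by (simp add: dotp_def z_def)
    have IR: "\<forall>v\<in>valuations m. dotp m v (x v) - p v \<ge> 0" and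
      IC: "\<forall>v\<in>valuations m. \<forall>w\<in>valuations m. dotp m v (x v) - p v \<ge> dotp m v (x w) - p w"
      using mech unfolding is_mechanism_def by blast+
    have pz: "p z \<le> 0" using IR zV dz[of "x z"] by auto
    have pzv: "\<And>v. v \<in> valuations m \<Longrightarrow> p z \<le> p v"
    proof -
      fix v assume v: "v \<in> valuations m"
      have "dotp m z (x z) - p z \<ge> dotp m z (x v) - p v" using IC zV v by blast
      then show "p z \<le> p v" by (simp add: dz)
    qed
    define p' where "p' = (\<lambda>v. max 0 (p v - p z))"
    have p'V: "\<And>v. v \<in> valuations m \<Longrightarrow> p' v = p v - p z" using pzv by (simp add: p'_def)
    have mech': "is_mechanism m G x p'"
      using mech unfolding is_mechanism_def
      apply (intro conjI)
      subgoal unfolding p'_def by (elim conjE) (intro borel_measurable_max borel_measurable_diff borel_measurable_const; assumption?)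
      subgoal by blast
      subgoal by blast
      subgoal proof (intro ballI)
        fix v w assume v: "v \<in> valuations m" and w: "w \<in> valuations m" and H: "p \<in> borel_measurable G \<and>
     (\<forall>i<m. (\<lambda>v. x v i) \<in> borel_measurable G) \<and>
     (\<forall>v\<in>valuations m. \<forall>i<m. 0 \<le> x v i \<and> x v i \<le> 1) \<and>
     (\<forall>v\<in>valuations m.
         \<forall>w\<in>valuations m. dotp m v (x w) - p w \<le> dotp m v (x v) - p v) \<and>
     (\<forall>v\<in>valuations m. 0 \<le> dotp m v (x v) - p v)"
        then have "dotp m v (x w) - p w \<le> dotp m v (x v) - p v" by blast
        then show "dotp m v (x w) - p' w \<le> dotp m v (x v) - p' v" using p'V[OF v] p'V[OF w] by simp
      qed
      subgoal proof (intro ballI)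
        fix v assume v: "v \<in> valuations m" and H: "p \<in> borel_measurable G \<and>
     (\<forall>i<m. (\<lambda>v. x v i) \<in> borel_measurable G) \<and>
     (\<forall>v\<in>valuations m. \<forall>i<m. 0 \<le> x v i \<and> x v i \<le> 1) \<and>
     (\<forall>v\<in>valuations m.
         \<forall>w\<in>valuations m. dotp m v (x w) - p w \<le> dotp m v (x v) - p v) \<and>
     (\<forall>v\<in>valuations m. 0 \<le> dotp m v (x v) - p v)"
        then have "dotp m v (x z) - p z \<le> dotp m v (x v) - p v" using v zV by blast
        moreover have "0 \<le> dotp m v (x z)" unfolding dotp_def
          using v zV H by (intro sum_nonneg) (auto simp: valuations_def PiE_def Pi_def)
        ultimately show "0 \<le> dotp m v (x v) - p' v" using p'V[OF v] pz by simp
      qed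
      done
    have s': "(x, p') \<in> mechS m G" using mech' by (auto simp: mechS_def p'_def)
    have "(\<integral>\<^sup>+ v. ennreal (p v) \<partial>G) \<le> (\<integral>\<^sup>+ v. ennreal (p' v) \<partial>G)"
      using AE
    proof (intro nn_integral_mono_AE, elim eventually_mono)
      fix v assume "v \<in> valuations m"
      then show "ennreal (p v) \<le> ennreal (p' v)" using p'V pz by (intro ennreal_leI) simp
    qed
    then have le1: "enn2ereal (\<integral>\<^sup>+ v. ennreal (p v) \<partial>G) \<le> enn2ereal (\<integral>\<^sup>+ v. ennreal (p' v) \<partial>G)"
      by (simp add: less_eq_ennreal.rep_eq)
    have "exp_revenue G p \<le> enn2ereal (\<integral>\<^sup>+ v. ennreal (p v) \<partial>G)"
      unfolding exp_revenue_def by (rule ereal_diff_le_self) simp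
    also have "\<dots> \<le> enn2ereal (\<integral>\<^sup>+ v. ennreal (p' v) \<partial>G)" by (rule le1)
    also have "\<dots> \<le> (SUP s\<in>mechS m G. enn2ereal (\<integral>\<^sup>+ v. ennreal (snd s v) \<partial>G))"
      using s' by (rule SUP_upper2) simp
    finally show "exp_revenue G p \<le> (SUP s\<in>mechS m G. enn2ereal (\<integral>\<^sup>+ v. ennreal (snd s v) \<partial>G))" .
  qed
qed


lemma le_div_ennreal: assumes "0 < t" "t \<le> 1" shows "(x::ennreal) \<le> x / ennreal t"
proof -
  have "x = x * 1" by simp
  also have "\<dots> \<le> x * ennreal (1/t)"
    using assms by (intro mult_left_mono) (auto simp: ennreal_1[symmetric] intro!: ennreal_leI simp del: ennreal_1)
  also have "\<dots> = x / ennreal t"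
    using assms by (simp add: divide_ennreal_def inverse_ennreal inverse_eq_divide)
  finally show ?thesis .
qed
theorem theorem5:
  fixes F :: "real measure" and a :: real and m :: nat
  assumes "prob_space F"
    and "sets F = sets borel"
    and "a \<ge> 0"
    and "F {a..} = 1"
    and "Rev m (prod_dist m F) < \<infinity>"
    and "\<exists>L::real. ((\<lambda>b. Rev m (prod_dist m (truncate_dist F a b))) \<longlongrightarrow> ereal L) at_top"
  shows "((\<lambda>b. Rev m (prod_dist m (truncate_dist F a b))) \<longlongrightarrow> Rev m (prod_dist m F)) at_top"
proof -
  note PF = assms(1) and sF = assms(2) and a0 = assms(3) and Fa = assms(4) and Rfin = assms(5)
  interpret F: real_distribution F
    using PF sF by (simp add: real_distribution_def real_distribution_axioms_def)
  define Fm where "Fm = PiM {..<m} (\<lambda>_. F)"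
  define box where "box b = PiE {..<m} (\<lambda>_. {a..b})" for b :: real
  define c where "c b = measure F {a..b}" for b
  define Q where "Q (G::(nat\<Rightarrow>real) measure) (s::((nat \<Rightarrow> real) \<Rightarrow> nat \<Rightarrow> real) \<times> ((nat \<Rightarrow> real) \<Rightarrow> real)) = enn2ereal (\<integral>\<^sup>+ v. ennreal (snd s v) \<partial>G)" for G s
  have PFm: "prob_space Fm" unfolding Fm_def by (rule prob_space_PiM) (rule PF)
  interpret Fm: prob_space Fm by (rule PFm)
  interpret FF: product_prob_space "\<lambda>_. F" "{..<m}"
    unfolding product_prob_space_def product_prob_space_axioms_def product_sigma_finite_def
    using PF prob_space_imp_sigma_finite by auto
  have sbox: "box b \<in> sets Fm" for b
    unfolding box_def Fm_def using sF by (auto intro!: sets_PiM_I_finite)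
  have emFm_box: "emeasure Fm (box b) = ennreal (c b ^ m)" for b
    unfolding box_def Fm_def c_def using sF
    by (simp add: FF.emeasure_PiM F.emeasure_eq_measure prod_ennreal ennreal_power)
  have Fa1: "measure F {a..} = 1" using Fa F.emeasure_eq_measure by simp
  have Flow: "measure F {..<a} = 0"
  proof -
    have "measure F {..<a} = 1 - measure F {a..}"
      using F.prob_compl[of "{a..}"] sF by (simp add: Compl_eq_Diff_UNIV[symmetric] not_le)
    then show ?thesis using Fa1 by simp
  qed
  have c_eq: "c b = cdf F b" if "a \<le> b" for b
  proof -
    have "{..b} = {..<a} \<union> {a..b}" using that by auto
    then have "measure F {..b} = measure F {..<a} + measure F {a..b}"
      using sF by (simp add: F.finite_measure_Union ivl_disj_int(4))
    then show ?thesis using Flow by (simp add: c_def cdf_def)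
  qed
  have c_lim: "(c \<longlongrightarrow> 1) at_top"
  proof (rule Lim_transform_eventually[OF F.cdf_lim_at_top_prob])
    show "\<forall>\<^sub>F b in at_top. cdf F b = c b"
      using eventually_ge_at_top[of a] by eventually_elim (simp add: c_eq)
  qed
  have c_pos: "\<forall>\<^sub>F b in at_top. 0 < c b"
    using order_tendstoD(1)[OF c_lim, of 0] by simp
  have c_le1: "c b \<le> 1" for b unfolding c_def by simp
  have AEFm: "AE v in Fm. v \<in> valuations m"
  proof -
    have s: "PiE {..<m} (\<lambda>_. {a..}) \<in> sets Fm"
      unfolding Fm_def using sF by (auto intro!: sets_PiM_I_finite)
    have "emeasure Fm (PiE {..<m} (\<lambda>_. {a..})) = 1"
      unfolding Fm_def using sF Fa by (simp add: FF.emeasure_PiM)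
    then have "AE v in Fm. v \<in> PiE {..<m} (\<lambda>_. {a..})"
      using s Fm.AE_in_set_eq_1 Fm.emeasure_eq_measure by simp
    then show ?thesis
      by (rule eventually_mono) (use a0 in \<open>auto simp: valuations_def PiE_def Pi_def\<close>)
  qed
  have AEFm': "AE v in Fm. v \<in> PiE {..<m} (\<lambda>_. {a..})"
  proof -
    have s: "PiE {..<m} (\<lambda>_. {a..}) \<in> sets Fm"
      unfolding Fm_def using sF by (auto intro!: sets_PiM_I_finite)
    have "emeasure Fm (PiE {..<m} (\<lambda>_. {a..})) = 1"
      unfolding Fm_def using sF Fa by (simp add: FF.emeasure_PiM)
    then show ?thesis
      using s Fm.AE_in_set_eq_1 Fm.emeasure_eq_measure by simp
  qed
  define Fb where "Fb b = prod_dist m (truncate_dist F a b)" for b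
  have Fb_eq: "Fb b = uniform_measure Fm (box b)" if "0 < c b" for b
  proof -
    have "emeasure F {a..b} \<noteq> 0" using that F.emeasure_eq_measure c_def by simp
    then show ?thesis
      unfolding Fb_def prod_dist_def truncate_dist_def Fm_def box_def
      using sF by (intro PiM_uniform PF) auto
  qed
  have sets_Fb: "sets (Fb b) = sets Fm" if "0 < c b" for b
    using Fb_eq[OF that] by simp
  have AEFb: "AE v in Fb b. v \<in> valuations m" if "0 < c b" for b
    unfolding Fb_eq[OF that] by (rule AE_uniform_measureI[OF sbox]) (rule eventually_mono[OF AEFm], simp)
  have mS: "mechS m (Fb b) = mechS m Fm" if "0 < c b" for b
    using sets_Fb[OF that] by (rule mechS_cong_sets)
  have intFb: "(\<integral>\<^sup>+ v. ennreal (snd s v) \<partial>Fb b) = (\<integral>\<^sup>+ v. ennreal (snd s v) * indicator (box b) v \<partial>Fm) / ennreal (c b ^ m)"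
    if "0 < c b" "s \<in> mechS m Fm" for b s
  proof -
    have "snd s \<in> borel_measurable Fm" using that(2) by (auto simp: mechS_def is_mechanism_def)
    then show ?thesis
      using Fb_eq[OF that(1)] sbox emFm_box by (simp add: nn_integral_uniform_measure)
  qed
  have RevFm: "Rev m Fm = (SUP s\<in>mechS m Fm. Q Fm s)"
    unfolding Q_def by (rule Rev_eq[OF AEFm])
  have RevFb: "Rev m (Fb b) = (SUP s\<in>mechS m Fm. Q (Fb b) s)" if "0 < c b" for b
    unfolding Q_def mS[OF that, symmetric] by (rule Rev_eq[OF AEFb[OF that]])
  have zero_mech: "((\<lambda>v i. 0), (\<lambda>v. 0)) \<in> mechS m G" for G
    by (auto simp: mechS_def is_mechanism_def dotp_def)
  have Rev_nonneg: "0 \<le> Rev m Fm" unfolding RevFm Q_def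
    by (rule SUP_upper2[OF zero_mech]) simp
  have Rev_nonneg_b: "0 \<le> Rev m (Fb b)" if "0 < c b" for b unfolding RevFb[OF that] Q_def
    by (rule SUP_upper2[OF zero_mech]) simp
  obtain r where r: "Rev m Fm = ereal r" and r0: "0 \<le> r"
    using Rev_nonneg Rfin unfolding Fm_def prod_dist_def
    by (cases "Rev m Fm") (auto simp: Fm_def prod_dist_def)
  have upper: "Rev m (Fb b) \<le> ereal (r / c b ^ m)" if cb: "0 < c b" for b
    unfolding RevFb[OF cb]
  proof (rule SUP_least)
    fix s assume s: "s \<in> mechS m Fm"
    have "enn2ereal (\<integral>\<^sup>+ v. ennreal (snd s v) \<partial>Fm) \<le> ereal r"
      using s unfolding r[symmetric] RevFm Q_def by (rule SUP_upper)
    then have le_r: "(\<integral>\<^sup>+ v. ennreal (snd s v) \<partial>Fm) \<le> ennreal r"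
      using r0 by (simp add: less_eq_ennreal.rep_eq)
    have "(\<integral>\<^sup>+ v. ennreal (snd s v) * indicator (box b) v \<partial>Fm) \<le> (\<integral>\<^sup>+ v. ennreal (snd s v) \<partial>Fm)"
      by (intro nn_integral_mono) (auto split: split_indicator)
    also note le_r
    finally have "(\<integral>\<^sup>+ v. ennreal (snd s v) \<partial>Fb b) \<le> ennreal r / ennreal (c b ^ m)"
      unfolding intFb[OF cb s] by (rule divide_right_mono_ennreal)
    also have "\<dots> = ennreal (r / c b ^ m)" using r0 cb by (simp add: divide_ennreal)
    finally show "Q (Fb b) s \<le> ereal (r / c b ^ m)"
      unfolding Q_def using r0 cb by (simp add: less_eq_ennreal.rep_eq)
  qed
  have lim_rc: "((\<lambda>b. ereal (r / c b ^ m)) \<longlongrightarrow> ereal r) at_top"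
  proof -
    have "((\<lambda>b. r / c b ^ m) \<longlongrightarrow> r / 1 ^ m) at_top"
      by (intro tendsto_intros c_lim) simp
    then show ?thesis by (simp add: tendsto_ereal)
  qed
  show ?thesis
    unfolding Fb_def[symmetric] Fm_def[symmetric] prod_dist_def[of m F]
  proof (rule order_tendstoI)
    fix y assume y: "Rev m Fm < y"
    have "\<forall>\<^sub>F b in at_top. ereal (r / c b ^ m) < y"
      using order_tendstoD(2)[OF lim_rc] y r by simp
    then show "\<forall>\<^sub>F b in at_top. Rev m (Fb b) < y"
      using c_pos by eventually_elim (use upper in \<open>blast intro: le_less_trans\<close>)
  next
    fix y assume y: "y < Rev m Fm"
    show "\<forall>\<^sub>F b in at_top. y < Rev m (Fb b)"
    proof (cases "y < 0")
      case True
      show ?thesis using c_pos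
      proof (rule eventually_mono)
        fix b assume cb: "0 < c b"
        show "y < Rev m (Fb b)" using True Rev_nonneg_b[OF cb] by (rule less_le_trans)
      qed
    next
      case False
      then have y0: "0 \<le> y" by simp
      from y obtain s where s: "s \<in> mechS m Fm" and ys: "y < Q Fm s"
        unfolding RevFm by (auto simp: less_SUP_iff)
      define p where "p = snd s"
      have pm: "p \<in> borel_measurable Fm" using s by (auto simp: mechS_def is_mechanism_def p_def)
      define g where "g n v = ennreal (p v) * indicator (box (real n)) v" for n :: nat and v
      have boxmono: "box b \<subseteq> box b'" if "b \<le> b'" for b b'
        using that unfolding box_def by (auto simp: PiE_def Pi_def)
      have inc: "incseq g"
        unfolding incseq_def le_fun_def
      proof (intro allI impI)
        fix k n :: nat and v assume "k \<le> n"
        then have "box (real k) \<subseteq> box (real n)" by (intro boxmono) simp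
        then show "g k v \<le> g n v" unfolding g_def by (auto split: split_indicator)
      qed
      have gm: "g n \<in> borel_measurable Fm" for n
        unfolding g_def using pm sbox by measurable
      have SUPg: "AE v in Fm. (SUP n. g n v) = ennreal (p v)"
        using AEFm'
      proof eventually_elim
        fix v assume v: "v \<in> PiE {..<m} (\<lambda>_. {a..})"
        define N where "N = nat \<lceil>\<Sum>i<m. v i\<rceil>"
        have "v \<in> box (real N)"
        proof -
          have "v i \<le> real N" if "i < m" for i
          proof -
            have "v i \<le> (\<Sum>i<m. v i)"
              using v a0 that by (intro member_le_sum) (auto simp: PiE_def Pi_def)
            also have "\<dots> \<le> real N" unfolding N_def by linarith
            finally show ?thesis .
          qed
          then show ?thesis using v unfolding box_def by (auto simp: PiE_def Pi_def)
        qed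
        then have "g N v = ennreal (p v)" by (simp add: g_def)
        moreover have "g n v \<le> ennreal (p v)" for n by (simp add: g_def split: split_indicator)
        ultimately show "(SUP n. g n v) = ennreal (p v)"
          by (intro antisym SUP_least) (auto intro: SUP_upper2[of N])
      qed
      have "(\<integral>\<^sup>+ v. ennreal (p v) \<partial>Fm) = (\<integral>\<^sup>+ v. (SUP n. g n v) \<partial>Fm)"
        using SUPg by (intro nn_integral_cong_AE) auto
      also have "\<dots> = (SUP n. \<integral>\<^sup>+ v. g n v \<partial>Fm)"
        by (rule nn_integral_monotone_convergence_SUP[OF inc gm])
      finally have eqS: "(\<integral>\<^sup>+ v. ennreal (p v) \<partial>Fm) = (SUP n. \<integral>\<^sup>+ v. g n v \<partial>Fm)" .
      have "e2ennreal y < (\<integral>\<^sup>+ v. ennreal (p v) \<partial>Fm)"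
        using ys y0 unfolding Q_def p_def by (metis enn2ereal_e2ennreal less_ennreal.rep_eq)
      then obtain n where n: "e2ennreal y < (\<integral>\<^sup>+ v. g n v \<partial>Fm)"
        unfolding eqS by (auto simp: less_SUP_iff)
      have "\<forall>\<^sub>F b in at_top. y < Rev m (Fb b)"
        using c_pos eventually_ge_at_top[of "real n"]
      proof eventually_elim
        case (elim b)
        have "(\<integral>\<^sup>+ v. g n v \<partial>Fm) \<le> (\<integral>\<^sup>+ v. ennreal (p v) * indicator (box b) v \<partial>Fm)"
          unfolding g_def using boxmono[OF elim(2)]
          by (intro nn_integral_mono) (auto split: split_indicator)
        also have "\<dots> \<le> (\<integral>\<^sup>+ v. ennreal (p v) * indicator (box b) v \<partial>Fm) / ennreal (c b ^ m)"
          using elim(1) c_le1 by (intro le_div_ennreal) (auto intro: power_le_one)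
        also have "\<dots> = (\<integral>\<^sup>+ v. ennreal (p v) \<partial>Fb b)"
          using intFb[OF elim(1) s] by (simp add: p_def)
        finally have "e2ennreal y < (\<integral>\<^sup>+ v. ennreal (p v) \<partial>Fb b)" using n by simp
        then have "y < Q (Fb b) s"
          unfolding Q_def p_def using y0 by (metis enn2ereal_e2ennreal less_ennreal.rep_eq)
        also have "\<dots> \<le> Rev m (Fb b)"
          unfolding RevFb[OF elim(1)] using s by (rule SUP_upper)
        finally show ?case .
      qed
      then show ?thesis .
    qed
  qed
qed

end
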